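(* Let $G=(V,E)$ be an $\alpha$-expander, let $\lambda\in(0,1)$, and let $\mathbf d\in\mathbb Z^V$ be the current discrepancy vector of the expander greedy process on $G$ at some time step $t$. Consider the $(1+\beta)$-process on vertex set $V$ with $\beta=\alpha$ and weights $w_v=\deg_G(v)$ for $v\in V$, started from the same discrepancy vector $\mathbf d$. Then (a) $\Delta_{-1}(\mathbf d)\le\widetilde\Delta_{-1}(\mathbf d)$ and (b) $\Delta_{+1}(\mathbf d)\le\widetilde\Delta_{+1}(\mathbf d)$. Hence the expected one-step change of the potential in the expander greedy process satisfies $\mathbb E[\Phi(\mathbf d^{t+1})-\Phi(\mathbf d)]\le \widetilde\Delta_{-1}(\mathbf d)+\widetilde\Delta_{+1}(\mathbf d)$, where $\mathbf d^{t+1}$ is the discrepancy vector after the next step.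
   Context: $\mathrm{vol}(S)=\sum_{v\in S}\deg(v)$; $G$ is an $\alpha$-expander if for every $S\subseteq V$, $|E(S,V\setminus S)|\ge\alpha\min\{\mathrm{vol}(S),\mathrm{vol}(V\setminus S)\}$. Expander greedy process: discrepancies $d_v$ (in-degree minus out-degree among arrived edges); at each step a uniformly random edge $\{i,j\}\in E$ arrives independently, and if $d_i\ge d_j$ (ties arbitrary) it is oriented $i\to j$, so $d_i$ decreases by $1$ and $d_j$ increases by $1$. Potential: $\Phi(\mathbf d)=\sum_{v\in V}\cosh(\lambda d_v)$. With $i$ the endpoint of the arriving edge of larger discrepancy and $j$ the other: $\Delta_{-1}(\mathbf d)=\mathbb E_{\{i,j\}\sim E}[\cosh(\lambda(d_i-1))-\cosh(\lambda d_i)]$ and $\Delta_{+1}(\mathbf d)=\mathbb E_{\{i,j\}\sim E}[\cosh(\lambda(d_j+1))-\cosh(\lambda d_j)]$. The $(1+\beta)$-process with weights $w\ge 0$: two vertices $u,v$ are sampled independently, each equal to $x\in V$ with probability $w_x/\sum_{y}w_y$, and the vector $\chi_u-\chi_v$ is signed: with probability $1-\beta$ uniformly at random (so each of $u,v$ is equally likely to be the vertex receiving $+1$, the other receiving $-1$), and with probability $\beta$ greedily (the one of $u,v$ with higher discrepancy receives $-1$, the other $+1$). Let $a$ denote the vertex receiving $+1$ and $b$ the vertex receiving $-1$. Then $\widetilde\Delta_{+1}(\mathbf d)=\mathbb E[\cosh(\lambda(d_a+1))-\cosh(\lambda d_a)]$ and $\widetilde\Delta_{-1}(\mathbf d)=\mathbb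 E[\cosh(\lambda(d_b-1))-\cosh(\lambda d_b)]$, the expectations being over the sampling of $u,v$ and the signing. *)

theory Defs
  imports Complex_Main
begin

definition simple_graph :: "'a set \<Rightarrow> 'a set set \<Rightarrow> bool" where
  "simple_graph V E \<longleftrightarrow> finite V \<and>
     (\<forall>e\<in>E. \<exists>u v. u \<in> V \<and> v \<in> V \<and> u \<noteq> v \<and> e = {u, v})"

definition deg :: "'a set set \<Rightarrow> 'a \<Rightarrow> nat" where
  "deg E v = card {e \<in> E. v \<in> e}"

definition vol :: "'a set set \<Rightarrow> 'a set \<Rightarrow> nat" where
  "vol E S = (\<Sum>v\<in>S. deg E v)"

definition cut_size :: "'a set set \<Rightarrow> 'a set \<Rightarrow> nat" where
  "cut_size E S = card {e \<in> E. e \<inter> S \<noteq> {} \<and> e - S \<noteq> {}}"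

definition expander :: "real \<Rightarrow> 'a set \<Rightarrow> 'a set set \<Rightarrow> bool" where
  "expander \<alpha> V E \<longleftrightarrow>
     (\<forall>S. S \<subseteq> V \<longrightarrow> real (cut_size E S) \<ge> \<alpha> * real (min (vol E S) (vol E (V - S))))"

definition Phi :: "'a set \<Rightarrow> real \<Rightarrow> ('a \<Rightarrow> int) \<Rightarrow> real" where
  "Phi V lam d = (\<Sum>v\<in>V. cosh (lam * real_of_int (d v)))"

definition fminus :: "real \<Rightarrow> int \<Rightarrow> real" where
  "fminus lam x = cosh (lam * real_of_int (x - 1)) - cosh (lam * real_of_int x)"

definition fplus :: "real \<Rightarrow> int \<Rightarrow> real" where
  "fplus lam x = cosh (lam * real_of_int (x + 1)) - cosh (lam * real_of_int x)"

text \<open>For an arriving edge e, the endpoint i has the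
  larger discrepancy (value Max (d ` e)), the other endpoint j the smaller one
  (value Min (d ` e)); ties are irrelevant for these quantities.\<close>
definition Delta_minus :: "'a set set \<Rightarrow> real \<Rightarrow> ('a \<Rightarrow> int) \<Rightarrow> real" where
  "Delta_minus E lam d = (\<Sum>e\<in>E. fminus lam (Max (d ` e))) / real (card E)"

definition Delta_plus :: "'a set set \<Rightarrow> real \<Rightarrow> ('a \<Rightarrow> int) \<Rightarrow> real" where
  "Delta_plus E lam d = (\<Sum>e\<in>E. fplus lam (Min (d ` e))) / real (card E)"

definition greedy_step :: "('a \<Rightarrow> int) \<Rightarrow> 'a set \<Rightarrow> ('a \<Rightarrow> int)" where
  "greedy_step d e =
     (let i = (SOME i. i \<in> e \<and> (\<forall>k\<in>e. d k \<le> d i));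
          j = (SOME j. j \<in> e \<and> j \<noteq> i)
      in d(i := d i - 1, j := d j + 1))"

definition expected_greedy_change ::
  "'a set \<Rightarrow> 'a set set \<Rightarrow> real \<Rightarrow> ('a \<Rightarrow> int) \<Rightarrow> real" where
  "expected_greedy_change V E lam d =
     (\<Sum>e\<in>E. Phi V lam (greedy_step d e) - Phi V lam d) / real (card E)"

text \<open>(1+beta)-process with weights w on V: u, v independent with probability
  w x / (sum of w); with probability 1-beta the signing is uniform
  (a = u, b = v or a = v, b = u, each with probability 1/2); with probability
  beta it is greedy (b = endpoint of larger discrepancy, a = the other, so
  d_b = max, d_a = min).  a receives +1, b receives -1.\<close>
definition tDelta_plus ::
  "'a set \<Rightarrow> ('a \<Rightarrow> real) \<Rightarrow> real \<Rightarrow> real \<Rightarrow> ('a \<Rightarrow> int) \<Rightarrow> real" where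
  "tDelta_plus V w \<beta> lam d =
     (let W = (\<Sum>y\<in>V. w y) in
      \<Sum>u\<in>V. \<Sum>v\<in>V. (w u / W) * (w v / W) *
        ((1 - \<beta>) * (fplus lam (d u) / 2 + fplus lam (d v) / 2)
         + \<beta> * fplus lam (min (d u) (d v))))"

definition tDelta_minus ::
  "'a set \<Rightarrow> ('a \<Rightarrow> real) \<Rightarrow> real \<Rightarrow> real \<Rightarrow> ('a \<Rightarrow> int) \<Rightarrow> real" where
  "tDelta_minus V w \<beta> lam d =
     (let W = (\<Sum>y\<in>V. w y) in
      \<Sum>u\<in>V. \<Sum>v\<in>V. (w u / W) * (w v / W) *
        ((1 - \<beta>) * (fminus lam (d v) / 2 + fminus lam (d u) / 2)
         + \<beta> * fminus lam (max (d u) (d v))))"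

end

theory Submission imports Defs "HOL-Analysis.Analysis" begin

lemma int_ind: "integrable lborel (indicator {a..<b} :: real \<Rightarrow> real)"
proof (cases "a \<le> b")
  case True then show ?thesis by (intro integrable_real_indicator) auto
next
  case False then have "{a..<b} = {}" by auto
  then show ?thesis by simp
qed

lemma lint_ind: "a \<le> b \<Longrightarrow> integral\<^sup>L lborel (indicator {a..<b} :: real \<Rightarrow> real) = b - a"
  by simp

lemma ind_xor: "(indicator {min a b..<max a b} (t::real) :: real) = (if (a > t) \<noteq> (b > t) then 1 else 0)"
  by (auto simp: indicator_def min_def max_def)

lemma sg_finite_E: "simple_graph V E \<Longrightarrow> finite E"
  unfolding simple_graph_def
  by (rule finite_subset[of _ "Pow V"]) auto

lemma sg_edge: "simple_graph V E \<Longrightarrow> e \<in> E \<Longrightarrow> \<exists>i j. i \<in> V \<and> j \<in> V \<and> i \<noteq> j \<and> e = {i, j}"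
  unfolding simple_graph_def by blast

lemma double_count:
  assumes sg: "simple_graph V E"
  shows "(\<Sum>e\<in>E. \<Sum>v\<in>e. g v) = (\<Sum>v\<in>V. real (deg E v) * g v)"
proof -
  have fV: "finite V" using sg by (simp add: simple_graph_def)
  have fE: "finite E" using sg_finite_E[OF sg] .
  have sub: "e \<subseteq> V" if "e \<in> E" for e using sg_edge[OF sg that] by auto
  have "(\<Sum>e\<in>E. \<Sum>v\<in>e. g v) = (\<Sum>e\<in>E. \<Sum>v\<in>V. if v \<in> e then g v else 0)"
  proof (rule sum.cong[OF refl])
    fix e assume "e \<in> E"
    then have "e \<subseteq> V" by (rule sub)
    then have "V \<inter> e = e" by auto
    then show "(\<Sum>v\<in>e. g v) = (\<Sum>v\<in>V. if v \<in> e then g v else 0)"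
      using fV by (simp add: sum.If_cases)
  qed
  also have "\<dots> = (\<Sum>v\<in>V. \<Sum>e\<in>E. if v \<in> e then g v else 0)"
    by (rule sum.swap)
  also have "\<dots> = (\<Sum>v\<in>V. real (deg E v) * g v)"
  proof (rule sum.cong[OF refl])
    fix v
    have "(\<Sum>e\<in>E. if v \<in> e then g v else 0) = (\<Sum>e\<in>{e\<in>E. v \<in> e}. g v)"
      using fE by (simp add: sum.If_cases Int_def conj_commute)
    also have "\<dots> = real (deg E v) * g v" by (simp add: deg_def)
    finally show "(\<Sum>e\<in>E. if v \<in> e then g v else 0) = real (deg E v) * g v" .
  qed
  finally show ?thesis .
qed

lemma handshake:
  assumes sg: "simple_graph V E"
  shows "(\<Sum>v\<in>V. real (deg E v)) = 2 * real (card E)"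
proof -
  have "(\<Sum>v\<in>V. real (deg E v)) = (\<Sum>e\<in>E. \<Sum>v\<in>e. (1::real))"
    using double_count[OF sg, of "\<lambda>_. 1"] by simp
  also have "\<dots> = (\<Sum>e\<in>E. 2)"
  proof (rule sum.cong[OF refl])
    fix e assume "e \<in> E"
    then obtain i j where "e = {i,j}" "i \<noteq> j" using sg_edge[OF sg] by blast
    then show "(\<Sum>v\<in>e. (1::real)) = 2" by simp
  qed
  finally show ?thesis by simp
qed

lemma alg_final:
  fixes a b c m al :: real
  assumes "a \<ge> 0" "b \<ge> 0" "a + b = 2 * m" "c \<ge> al * min a b" "al > 0"
  shows "al * (2 * a * b) \<le> 4 * m * c"
proof -
  have "2 * a * b \<le> 4 * m * min a b"
  proof (cases "a \<le> b")
    case True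
    then have "a * b \<le> (a + b) * a" using assms(1,2) by (simp add: algebra_simps)
    then show ?thesis using True assms(3) by (simp add: min_def algebra_simps)
  next
    case False
    then have "a * b \<le> (a + b) * b" using assms(1,2) by (simp add: algebra_simps)
    then show ?thesis using False assms(3) by (simp add: min_def algebra_simps)
  qed
  then have "al * (2 * a * b) \<le> al * (4 * m * min a b)"
    using assms(5) by (intro mult_left_mono) auto
  also have "\<dots> = 4 * m * (al * min a b)" by simp
  also have "\<dots> \<le> 4 * m * c" using assms(3,4,1,2) by (intro mult_left_mono) auto
  finally show ?thesis .
qed

lemma pointwise:
  assumes sg: "simple_graph V E" and exp: "expander \<alpha> V E" and apos: "\<alpha> > 0"
  shows "\<alpha> * (\<Sum>u\<in>V. \<Sum>v\<in>V. real (deg E u) * real (deg E v) * indicator {min (g u) (g v)..<max (g u) (g v)} t)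
     \<le> 4 * real (card E) * (\<Sum>e\<in>E. indicator {Min (g ` e)..<Max (g ` e)} (t::real))"
proof -
  have fV: "finite V" using sg by (simp add: simple_graph_def)
  have fE: "finite E" using sg_finite_E[OF sg] .
  define S where "S = {v\<in>V. g v > t}"
  have SV: "S \<subseteq> V" by (auto simp: S_def)
  have VS: "V - S = {v\<in>V. \<not> g v > t}" by (auto simp: S_def)
  define a where "a = (\<Sum>v\<in>S. real (deg E v))"
  define b where "b = (\<Sum>v\<in>V - S. real (deg E v))"
  have a0: "a \<ge> 0" "b \<ge> 0" unfolding a_def b_def by (auto intro: sum_nonneg)
  have ab: "a + b = 2 * real (card E)"
  proof -
    have "(\<Sum>v\<in>V. real (deg E v)) = b + a"
      unfolding a_def b_def by (rule sum.subset_diff[OF SV fV])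
    then show ?thesis using handshake[OF sg] by simp
  qed
  have avol: "real (vol E S) = a" "real (vol E (V - S)) = b"
    by (simp_all add: vol_def a_def b_def)
  have cut: "real (cut_size E S) \<ge> \<alpha> * min a b"
  proof -
    have "real (cut_size E S) \<ge> \<alpha> * real (min (vol E S) (vol E (V - S)))"
      using exp SV unfolding expander_def by blast
    moreover have "real (min (vol E S) (vol E (V - S))) = min a b"
      using avol by (simp add: min_def)
    ultimately show ?thesis by simp
  qed
  have F: "(\<Sum>e\<in>E. indicator {Min (g ` e)..<Max (g ` e)} t) = real (cut_size E S)"
  proof -
    have "(\<Sum>e\<in>E. indicator {Min (g ` e)..<Max (g ` e)} t) =
          (\<Sum>e\<in>E. if e \<inter> S \<noteq> {} \<and> e - S \<noteq> {} then 1 else (0::real))"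
    proof (rule sum.cong[OF refl])
      fix e assume "e \<in> E"
      then obtain i j where ij: "i \<in> V" "j \<in> V" "i \<noteq> j" "e = {i,j}" using sg_edge[OF sg] by blast
      have "indicator {Min (g ` e)..<Max (g ` e)} t = (indicator {min (g i) (g j)..<max (g i) (g j)} t :: real)"
        using ij by simp
      also have "\<dots> = (if (g i > t) \<noteq> (g j > t) then 1 else 0)" by (rule ind_xor)
      also have "\<dots> = (if e \<inter> S \<noteq> {} \<and> e - S \<noteq> {} then 1 else (0::real))"
        using ij by (auto simp: S_def)
      finally show "indicator {Min (g ` e)..<Max (g ` e)} t = (if e \<inter> S \<noteq> {} \<and> e - S \<noteq> {} then 1 else (0::real))" .
    qed
    also have "\<dots> = real (card {e \<in> E. e \<inter> S \<noteq> {} \<and> e - S \<noteq> {}})"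
      using fE by (simp add: sum.If_cases Int_def)
    finally show ?thesis by (simp add: cut_size_def)
  qed
  have G: "(\<Sum>u\<in>V. \<Sum>v\<in>V. real (deg E u) * real (deg E v) * indicator {min (g u) (g v)..<max (g u) (g v)} t)
      = 2 * a * b"
  proof -
    have inner: "(\<Sum>v\<in>V. real (deg E u) * real (deg E v) * indicator {min (g u) (g v)..<max (g u) (g v)} t)
       = real (deg E u) * (if g u > t then b else a)" for u
    proof -
      have "(\<Sum>v\<in>V. real (deg E u) * real (deg E v) * indicator {min (g u) (g v)..<max (g u) (g v)} t)
         = real (deg E u) * (\<Sum>v\<in>V. if (g u > t) \<noteq> (g v > t) then real (deg E v) else 0)"
      proof -
        have "(\<Sum>v\<in>V. real (deg E u) * real (deg E v) * indicator {min (g u) (g v)..<max (g u) (g v)} t)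
          = (\<Sum>v\<in>V. real (deg E u) * (if (g u > t) \<noteq> (g v > t) then real (deg E v) else 0))"
          by (rule sum.cong[OF refl]) (simp add: ind_xor)
        then show ?thesis by (simp add: sum_distrib_left)
      qed
      also have "(\<Sum>v\<in>V. if (g u > t) \<noteq> (g v > t) then real (deg E v) else 0) = (if g u > t then b else a)"
      proof (cases "g u > t")
        case True
        then have "(\<Sum>v\<in>V. if (g u > t) \<noteq> (g v > t) then real (deg E v) else 0)
           = (\<Sum>v\<in>V. if \<not> g v > t then real (deg E v) else 0)" by simp
        also have "\<dots> = b" unfolding b_def VS using fV by (simp add: sum.inter_filter)
        finally show ?thesis using True by simp
      next
        case False
        then have "(\<Sum>v\<in>V. if (g u > t) \<noteq> (g v > t) then real (deg E v) else 0)
           = (\<Sum>v\<in>V. if g v > t then real (deg E v) else 0)" by simp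
        also have "\<dots> = a" unfolding a_def S_def using fV by (simp add: sum.inter_filter)
        finally show ?thesis using False by simp
      qed
      finally show ?thesis .
    qed
    have "(\<Sum>u\<in>V. \<Sum>v\<in>V. real (deg E u) * real (deg E v) * indicator {min (g u) (g v)..<max (g u) (g v)} t)
        = (\<Sum>u\<in>V. real (deg E u) * (if g u > t then b else a))"
      by (simp add: inner)
    also have "\<dots> = (\<Sum>u\<in>V. (if g u > t then real (deg E u) else 0)) * b
                  + (\<Sum>u\<in>V. (if \<not> g u > t then real (deg E u) else 0)) * a"
    proof -
      have "(\<Sum>u\<in>V. real (deg E u) * (if g u > t then b else a)) =
         (\<Sum>u\<in>V. (if g u > t then real (deg E u) else 0) * b + (if \<not> g u > t then real (deg E u) else 0) * a)"
        by (rule sum.cong) auto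
      also have "\<dots> = (\<Sum>u\<in>V. (if g u > t then real (deg E u) else 0)) * b
                  + (\<Sum>u\<in>V. (if \<not> g u > t then real (deg E u) else 0)) * a"
        by (simp add: sum.distrib sum_distrib_right)
      finally show ?thesis .
    qed
    also have "(\<Sum>u\<in>V. (if g u > t then real (deg E u) else 0)) = a"
      unfolding a_def S_def using fV by (simp add: sum.inter_filter)
    also have "(\<Sum>u\<in>V. (if \<not> g u > t then real (deg E u) else 0)) = b"
      unfolding b_def VS using fV by (simp add: sum.inter_filter)
    finally show ?thesis by simp
  qed
  show ?thesis unfolding F G using alg_final[OF a0 ab cut apos] .
qed


lemma mm: "max a b - min a b = \<bar>a - b\<bar>" for a b :: real
  by (simp add: max_def min_def)

lemma KI:
  assumes sg: "simple_graph V E" and exp: "expander \<alpha> V E" and apos: "\<alpha> > 0"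
  shows "\<alpha> * (\<Sum>u\<in>V. \<Sum>v\<in>V. real (deg E u) * real (deg E v) * \<bar>g u - g v\<bar>)
     \<le> 4 * real (card E) * (\<Sum>e\<in>E. Max (g ` e) - Min (g ` e))"
proof -
  define G where "G = (\<lambda>t. \<alpha> * (\<Sum>u\<in>V. \<Sum>v\<in>V. real (deg E u) * real (deg E v) * indicator {min (g u) (g v)..<max (g u) (g v)} (t::real)))"
  define F where "F = (\<lambda>t. 4 * real (card E) * (\<Sum>e\<in>E. indicator {Min (g ` e)..<Max (g ` e)} (t::real)))"
  have iG: "integrable lborel G" unfolding G_def by (auto intro!: integrable_sum int_ind)
  have iF: "integrable lborel F" unfolding F_def by (auto intro!: integrable_sum int_ind)
  have "integral\<^sup>L lborel G \<le> integral\<^sup>L lborel F"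
    using iG iF pointwise[OF sg exp apos] unfolding G_def F_def by (intro integral_mono) auto
  moreover have "integral\<^sup>L lborel G = \<alpha> * (\<Sum>u\<in>V. \<Sum>v\<in>V. real (deg E u) * real (deg E v) * \<bar>g u - g v\<bar>)"
    unfolding G_def
    by (simp add: integral_sum int_ind integrable_sum lint_ind mm)
  moreover have "integral\<^sup>L lborel F = 4 * real (card E) * (\<Sum>e\<in>E. Max (g ` e) - Min (g ` e))"
  proof -
    have "integral\<^sup>L lborel F = 4 * real (card E) * (\<Sum>e\<in>E. integral\<^sup>L lborel (indicator {Min (g ` e)..<Max (g ` e)} :: real \<Rightarrow> real))"
      unfolding F_def by (simp add: integral_sum int_ind integrable_sum)
    also have "(\<Sum>e\<in>E. integral\<^sup>L lborel (indicator {Min (g ` e)..<Max (g ` e)} :: real \<Rightarrow> real)) = (\<Sum>e\<in>E. Max (g ` e) - Min (g ` e))"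
    proof (rule sum.cong[OF refl])
      fix e assume "e \<in> E"
      then obtain i j where ij: "e = {i,j}" using sg_edge[OF sg] by blast
      show "integral\<^sup>L lborel (indicator {Min (g ` e)..<Max (g ` e)} :: real \<Rightarrow> real) = Max (g ` e) - Min (g ` e)"
        by (rule lint_ind) (simp add: ij)
    qed
    finally show ?thesis .
  qed
  ultimately show ?thesis by simp
qed


lemma min_eq: "min a b = ((a + b) - (max a b - min a b)) / 2" for a b :: real
  by (simp add: max_def min_def)

lemma core:
  assumes sg: "simple_graph V E" and ne: "E \<noteq> {}" and exp: "expander \<alpha> V E" and apos: "\<alpha> > 0"
  shows "(\<Sum>e\<in>E. Min (g ` e)) / real (card E) \<le>
    (let W = (\<Sum>y\<in>V. real (deg E y)) in
      \<Sum>u\<in>V. \<Sum>v\<in>V. (real (deg E u) / W) * (real (deg E v) / W) *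
        ((1 - \<alpha>) * (g u / 2 + g v / 2) + \<alpha> * min (g u) (g v)))"
proof -
  define w where "w = (\<lambda>u. real (deg E u))"
  define m where "m = real (card E)"
  have fE: "finite E" by (rule sg_finite_E[OF sg])
  have mpos: "m > 0" using fE ne by (simp add: m_def card_gt_0_iff)
  have W: "(\<Sum>y\<in>V. real (deg E y)) = 2 * m" using handshake[OF sg] by (simp add: m_def)
  define X where "X = (\<Sum>v\<in>V. w v * g v)"
  define D where "D = (\<Sum>e\<in>E. Max (g ` e) - Min (g ` e))"
  define A where "A = (\<Sum>u\<in>V. \<Sum>v\<in>V. w u * w v * \<bar>g u - g v\<bar>)"
  have KI': "\<alpha> * A \<le> 4 * m * D" using KI[OF sg exp apos, of g] by (simp add: A_def D_def w_def m_def)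
  have S1: "(\<Sum>e\<in>E. Min (g ` e)) = X / 2 - D / 2"
  proof -
    have "(\<Sum>e\<in>E. Min (g ` e)) = (\<Sum>e\<in>E. ((\<Sum>v\<in>e. g v) - (Max (g ` e) - Min (g ` e))) / 2)"
    proof (rule sum.cong[OF refl])
      fix e assume "e \<in> E"
      then obtain i j where ij: "e = {i,j}" "i \<noteq> j" using sg_edge[OF sg] by blast
      show "Min (g ` e) = ((\<Sum>v\<in>e. g v) - (Max (g ` e) - Min (g ` e))) / 2"
        using ij by (simp add: min_def max_def)
    qed
    also have "\<dots> = (\<Sum>e\<in>E. \<Sum>v\<in>e. g v) / 2 - D / 2"
      by (simp add: D_def sum_subtractf sum_divide_distrib[symmetric] diff_divide_distrib)
    also have "(\<Sum>e\<in>E. \<Sum>v\<in>e. g v) = X" unfolding X_def w_def by (rule double_count[OF sg])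
    finally show ?thesis .
  qed
  have S2: "(\<Sum>u\<in>V. \<Sum>v\<in>V. (w u / (2*m)) * (w v / (2*m)) *
        ((1 - \<alpha>) * (g u / 2 + g v / 2) + \<alpha> * min (g u) (g v)))
      = ((\<Sum>u\<in>V. \<Sum>v\<in>V. w u * w v * (g u + g v)) / 2 - \<alpha> / 2 * A) / (4 * m^2)"
  proof -
    have "(\<Sum>u\<in>V. \<Sum>v\<in>V. (w u / (2*m)) * (w v / (2*m)) *
        ((1 - \<alpha>) * (g u / 2 + g v / 2) + \<alpha> * min (g u) (g v)))
      = (\<Sum>u\<in>V. \<Sum>v\<in>V. (w u * w v * (g u + g v) / 2 - \<alpha> / 2 * (w u * w v * \<bar>g u - g v\<bar>)) / (4 * m^2))"
    proof (intro sum.cong refl)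
      fix u v
      have mn: "min (g u) (g v) = ((g u + g v) - \<bar>g u - g v\<bar>) / 2" by (simp add: min_def)
      show "(w u / (2*m)) * (w v / (2*m)) * ((1 - \<alpha>) * (g u / 2 + g v / 2) + \<alpha> * min (g u) (g v))
        = (w u * w v * (g u + g v) / 2 - \<alpha> / 2 * (w u * w v * \<bar>g u - g v\<bar>)) / (4 * m^2)"
        unfolding mn using mpos by (simp add: power2_eq_square field_simps)
    qed
    also have "\<dots> = ((\<Sum>u\<in>V. \<Sum>v\<in>V. w u * w v * (g u + g v)) / 2 - \<alpha> / 2 * A) / (4 * m^2)"
      by (simp add: A_def sum_divide_distrib[symmetric] sum_subtractf sum_distrib_left)
    finally show ?thesis .
  qed
  have S3: "(\<Sum>u\<in>V. \<Sum>v\<in>V. w u * w v * (g u + g v)) = 2 * (2 * m) * X"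
  proof -
    have "(\<Sum>u\<in>V. \<Sum>v\<in>V. w u * w v * (g u + g v)) =
       (\<Sum>u\<in>V. w u * g u * (\<Sum>v\<in>V. w v)) + (\<Sum>u\<in>V. w u * (\<Sum>v\<in>V. w v * g v))"
      by (simp add: sum.distrib sum_distrib_left algebra_simps)
    also have "\<dots> = (\<Sum>v\<in>V. w v) * X + (\<Sum>v\<in>V. w v) * X"
      by (simp add: X_def sum_distrib_right[symmetric] sum_distrib_left[symmetric] mult.commute)
    finally show ?thesis using W by (simp add: w_def)
  qed
  have "(\<Sum>e\<in>E. Min (g ` e)) / m \<le> ((2 * (2 * m) * X) / 2 - \<alpha> / 2 * A) / (4 * m^2)"
  proof -
    have "((2 * (2 * m) * X) / 2 - \<alpha> / 2 * A) / (4 * m^2) - (X / 2 - D / 2) / m = (4 * m * D - \<alpha> * A) / (8 * m^2)"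
      using mpos by (simp add: field_simps power2_eq_square)
    also have "\<dots> \<ge> 0" using KI' mpos by simp
    finally show ?thesis using S1 by simp
  qed
  then show ?thesis using S2 S3 W unfolding Let_def by (simp add: w_def m_def)
qed


lemma fplus_exp: "fplus lam x = (exp (lam * x) * (exp lam - 1) + exp (- (lam * x)) * (exp (- lam) - 1)) / 2"
proof -
  have a: "exp (lam * real_of_int (x + 1)) = exp (lam * x) * exp lam"
    by (simp add: distrib_left exp_add[symmetric])
  have b: "exp (- (lam * real_of_int (x + 1))) = exp (- (lam * x)) * exp (- lam)"
    by (simp add: distrib_left exp_add[symmetric])
  show ?thesis unfolding fplus_def cosh_def a b by (simp add: algebra_simps diff_divide_distrib add_divide_distrib)
qed

lemma fminus_exp: "fminus lam x = (exp (lam * x) * (exp (- lam) - 1) + exp (- (lam * x)) * (exp lam - 1)) / 2"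
proof -
  have a: "exp (lam * real_of_int (x - 1)) = exp (lam * x) * exp (- lam)"
    by (simp add: right_diff_distrib exp_add[symmetric])
  have b: "exp (- (lam * real_of_int (x - 1))) = exp (- (lam * x)) * exp lam"
    by (simp add: right_diff_distrib exp_add[symmetric])
  show ?thesis unfolding fminus_def cosh_def a b by (simp add: algebra_simps diff_divide_distrib add_divide_distrib)
qed

lemma fplus_mono:
  assumes "lam > 0" "x \<le> y" shows "fplus lam x \<le> fplus lam y"
proof -
  have "lam * real_of_int x \<le> lam * real_of_int y" using assms by simp
  then have 1: "exp (lam * x) * (exp lam - 1) \<le> exp (lam * y) * (exp lam - 1)"
    using assms by (intro mult_right_mono) auto
  have "- (lam * real_of_int y) \<le> - (lam * real_of_int x)" using assms by simp
  then have 2: "exp (- (lam * x)) * (exp (- lam) - 1) \<le> exp (- (lam * y)) * (exp (- lam) - 1)"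
    using assms by (intro mult_right_mono_neg) auto
  show ?thesis unfolding fplus_exp using 1 2 by simp
qed

lemma fminus_anti:
  assumes "lam > 0" "x \<le> y" shows "fminus lam y \<le> fminus lam x"
proof -
  have "lam * real_of_int x \<le> lam * real_of_int y" using assms by simp
  then have 1: "exp (lam * y) * (exp (- lam) - 1) \<le> exp (lam * x) * (exp (- lam) - 1)"
    using assms by (intro mult_right_mono_neg) auto
  have "- (lam * real_of_int y) \<le> - (lam * real_of_int x)" using assms by simp
  then have 2: "exp (- (lam * y)) * (exp lam - 1) \<le> exp (- (lam * x)) * (exp lam - 1)"
    using assms by (intro mult_right_mono) auto
  show ?thesis unfolding fminus_exp using 1 2 by simp
qed

lemma fplus_min: "lam > 0 \<Longrightarrow> fplus lam (min a b) = min (fplus lam a) (fplus lam b)"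
  using fplus_mono[of lam a b] fplus_mono[of lam b a] by (auto simp: min_def)

lemma fminus_max: "lam > 0 \<Longrightarrow> fminus lam (max a b) = min (fminus lam a) (fminus lam b)"
  using fminus_anti[of lam a b] fminus_anti[of lam b a] by (auto simp: min_def max_def)

lemma part_plus:
  assumes sg: "simple_graph V E" and ne: "E \<noteq> {}" and exp: "expander \<alpha> V E" and apos: "\<alpha> > 0"
    and lpos: "lam > 0"
  shows "Delta_plus E lam d \<le> tDelta_plus V (\<lambda>v. real (deg E v)) \<alpha> lam d"
proof -
  define g where "g = (\<lambda>v. fplus lam (d v))"
  have "(\<Sum>e\<in>E. fplus lam (Min (d ` e))) = (\<Sum>e\<in>E. Min (g ` e))"
  proof (rule sum.cong[OF refl])
    fix e assume "e \<in> E"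
    then obtain i j where ij: "e = {i,j}" using sg_edge[OF sg] by blast
    show "fplus lam (Min (d ` e)) = Min (g ` e)" using ij fplus_min[OF lpos] by (simp add: g_def)
  qed
  then have "Delta_plus E lam d = (\<Sum>e\<in>E. Min (g ` e)) / real (card E)"
    by (simp add: Delta_plus_def)
  also have "\<dots> \<le> (let W = (\<Sum>y\<in>V. real (deg E y)) in
      \<Sum>u\<in>V. \<Sum>v\<in>V. (real (deg E u) / W) * (real (deg E v) / W) *
        ((1 - \<alpha>) * (g u / 2 + g v / 2) + \<alpha> * min (g u) (g v)))" by (rule core[OF sg ne exp apos])
  also have "\<dots> = tDelta_plus V (\<lambda>v. real (deg E v)) \<alpha> lam d"
    unfolding tDelta_plus_def Let_def g_def by (simp add: fplus_min[OF lpos])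
  finally show ?thesis .
qed

lemma part_minus:
  assumes sg: "simple_graph V E" and ne: "E \<noteq> {}" and exp: "expander \<alpha> V E" and apos: "\<alpha> > 0"
    and lpos: "lam > 0"
  shows "Delta_minus E lam d \<le> tDelta_minus V (\<lambda>v. real (deg E v)) \<alpha> lam d"
proof -
  define g where "g = (\<lambda>v. fminus lam (d v))"
  have "(\<Sum>e\<in>E. fminus lam (Max (d ` e))) = (\<Sum>e\<in>E. Min (g ` e))"
  proof (rule sum.cong[OF refl])
    fix e assume "e \<in> E"
    then obtain i j where ij: "e = {i,j}" using sg_edge[OF sg] by blast
    show "fminus lam (Max (d ` e)) = Min (g ` e)" using ij fminus_max[OF lpos] by (simp add: g_def)
  qed
  then have "Delta_minus E lam d = (\<Sum>e\<in>E. Min (g ` e)) / real (card E)"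
    by (simp add: Delta_minus_def)
  also have "\<dots> \<le> (let W = (\<Sum>y\<in>V. real (deg E y)) in
      \<Sum>u\<in>V. \<Sum>v\<in>V. (real (deg E u) / W) * (real (deg E v) / W) *
        ((1 - \<alpha>) * (g u / 2 + g v / 2) + \<alpha> * min (g u) (g v)))" by (rule core[OF sg ne exp apos])
  also have "\<dots> = tDelta_minus V (\<lambda>v. real (deg E v)) \<alpha> lam d"
    unfolding tDelta_minus_def Let_def g_def by (simp add: fminus_max[OF lpos] add.commute)
  finally show ?thesis .
qed

lemma step_change:
  assumes sg: "simple_graph V E" and e: "e \<in> E"
  shows "Phi V lam (greedy_step d e) - Phi V lam d = fminus lam (Max (d ` e)) + fplus lam (Min (d ` e))"
proof -
  have fV: "finite V" using sg by (simp add: simple_graph_def)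
  obtain i0 j0 where ij0: "i0 \<in> V" "j0 \<in> V" "i0 \<noteq> j0" "e = {i0,j0}" using sg_edge[OF sg e] by blast
  define i where "i = (SOME i. i \<in> e \<and> (\<forall>k\<in>e. d k \<le> d i))"
  have "\<exists>i. i \<in> e \<and> (\<forall>k\<in>e. d k \<le> d i)"
    using ij0 by (cases "d j0 \<le> d i0") auto
  then have ip: "i \<in> e \<and> (\<forall>k\<in>e. d k \<le> d i)" unfolding i_def by (rule someI_ex)
  define j where "j = (SOME j. j \<in> e \<and> j \<noteq> i)"
  have "\<exists>j. j \<in> e \<and> j \<noteq> i" using ij0 ip by auto
  then have jp: "j \<in> e \<and> j \<noteq> i" unfolding j_def by (rule someI_ex)
  have eij: "e = {i, j}" using ij0 ip jp by auto
  have ijV: "i \<in> V" "j \<in> V" using ij0 eij ip jp by auto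
  have dji: "d j \<le> d i" using ip jp by auto
  have gs: "greedy_step d e = d(i := d i - 1, j := d j + 1)"
    unfolding greedy_step_def Let_def i_def[symmetric] j_def[symmetric] ..
  have "Phi V lam (greedy_step d e) - Phi V lam d =
     (\<Sum>v\<in>V. (if v = i then fminus lam (d i) else 0) + (if v = j then fplus lam (d j) else 0))"
    unfolding Phi_def gs sum_subtractf[symmetric]
    by (rule sum.cong[OF refl]) (use jp in \<open>auto simp: fminus_def fplus_def\<close>)
  also have "\<dots> = fminus lam (d i) + fplus lam (d j)"
    using fV ijV by (simp add: sum.distrib)
  moreover have "Max (d ` e) = d i" using eij dji by (simp add: max_def)
  moreover have "Min (d ` e) = d j" using eij dji by (simp add: min_def)
  ultimately show ?thesis by simp
qed

theorem mainTheorem3: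
  fixes V :: "'a set" and E :: "'a set set" and \<alpha> lam :: real and d :: "'a \<Rightarrow> int"
  assumes "simple_graph V E"
    and "E \<noteq> {}"
    and "\<alpha> > 0"
    and "expander \<alpha> V E"
    and "0 < lam" and "lam < 1"
  shows "Delta_minus E lam d \<le> tDelta_minus V (\<lambda>v. real (deg E v)) \<alpha> lam d
     \<and> Delta_plus E lam d \<le> tDelta_plus V (\<lambda>v. real (deg E v)) \<alpha> lam d
     \<and> expected_greedy_change V E lam d
           \<le> tDelta_minus V (\<lambda>v. real (deg E v)) \<alpha> lam d
             + tDelta_plus V (\<lambda>v. real (deg E v)) \<alpha> lam d"
proof -
  have m: "Delta_minus E lam d \<le> tDelta_minus V (\<lambda>v. real (deg E v)) \<alpha> lam d"
    using part_minus assms by blast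
  have p: "Delta_plus E lam d \<le> tDelta_plus V (\<lambda>v. real (deg E v)) \<alpha> lam d"
    using part_plus assms by blast
  have "expected_greedy_change V E lam d = Delta_minus E lam d + Delta_plus E lam d"
    unfolding expected_greedy_change_def Delta_minus_def Delta_plus_def
    by (simp add: step_change[OF assms(1)] sum.distrib add_divide_distrib)
  then show ?thesis using m p by simp
qed

end
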